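(* Let $\mathcal H$ be a separable Hilbert space, let $q,r,s\ge1$ satisfy $\frac1{2q}+\frac1{2r}=\frac1s$, let $(e_n)_{n\ge1}$ and $(f_n)_{n\ge1}$ be orthonormal bases of $\mathcal H$, and let $X\in\mathcal C_s$. (i) If $(\lambda_n)_{n\ge1}$ and $(\rho_n)_{n\ge1}$ are summable sequences of positive reals, then $$\sup_{\eta>0}\Big\|\Big(\eta I+\Big(\sum_{n=1}^\infty\lambda_n\Big)e_1\otimes e_1\Big)^{\frac1{2q}-\frac12}\sum_{n=1}^\infty\lambda_n^{\frac12-\frac1{2q}}\rho_n^{\frac1{2r}}\langle Xf_1,e_n\rangle f_n\otimes e_1\Big\|_s\le\Big(\sum_{n=1}^\infty\rho_n\Big)^{\frac1{2r}}\|Xf_1\|,$$ $$\Big\|\sum_{n=1}^\infty\lambda_n^{\frac12-\frac1{2q}}\rho_n^{\frac1{2r}}\langle Xf_1,e_n\rangle f_n\otimes e_1\Big\|_s\le\Big(\sum_{n=1}^\infty\lambda_n\Big)^{\frac12-\frac1{2q}}\Big(\sum_{n=1}^\infty\rho_n\Big)^{\frac1{2r}}\|Xf_1\|,$$ where the series converge in $\mathcal C_s$. (ii) Assume $q>1$. If $(\gamma_n)\in\ell^{\frac{2q}{q-1}}$ and $(w_n)\in\ell^{2r}$ are sequences of positive reals, then $$\sup_{\eta>0}\Big\|\Big(\eta I+\Big(\sum_{n=1}^\infty\gamma_n^{\frac{2q}{q-1}}\Big)e_1\otimes e_1\Big)^{\frac1{2q}-\frac12}\sum_{n=1}^\infty\gamma_nw_n\langle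 Xf_1,e_n\rangle f_n\otimes e_1\Big\|_s\le\Big(\sum_{n=1}^\infty w_n^{2r}\Big)^{\frac1{2r}}\|Xf_1\|,$$ $$\Big\|\sum_{n=1}^\infty\gamma_nw_n\langle Xf_1,e_n\rangle f_n\otimes e_1\Big\|_s\le\Big(\sum_{n=1}^\infty\gamma_n^{\frac{2q}{q-1}}\Big)^{\frac{q-1}{2q}}\Big(\sum_{n=1}^\infty w_n^{2r}\Big)^{\frac1{2r}}\|Xf_1\|.$$
   Context: For $g,f\in\mathcal H$, $g\otimes f$ denotes the rank-one operator $h\mapsto\langle h,g\rangle f$. $\mathcal C_s$ is the Schatten–von Neumann class with norm $\|\cdot\|_s$; sums are taken in $\mathcal C_s$ (convergence of partial sums in $\|\cdot\|_s$). $\|Xf_1\|$ is the Hilbert space norm of the vector $Xf_1$. *)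

theory Defs
  imports Complex_Main
begin

text \<open>The separable (infinite-dimensional) Hilbert space H is modelled concretely as
  l2(nat) with complex entries; operators are functions on vectors, only their
  values on l2 matter.\<close>

type_synonym vec = "nat \<Rightarrow> complex"
type_synonym op = "vec \<Rightarrow> vec"

definition l2 :: "vec set" where
  "l2 = {x. summable (\<lambda>n. (cmod (x n))\<^sup>2)}"

definition inner_l2 :: "vec \<Rightarrow> vec \<Rightarrow> complex" where
  "inner_l2 x y = (\<Sum>n. x n * cnj (y n))"

definition norm_l2 :: "vec \<Rightarrow> real" where
  "norm_l2 x = sqrt (\<Sum>n. (cmod (x n))\<^sup>2)"

definition orthonormal_basis :: "(nat \<Rightarrow> vec) \<Rightarrow> bool" where
  "orthonormal_basis e \<longleftrightarrow>
     (\<forall>n. e n \<in> l2) \<and>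
     (\<forall>m n. inner_l2 (e m) (e n) = (if m = n then 1 else 0)) \<and>
     (\<forall>x\<in>l2. (\<forall>n. inner_l2 x (e n) = 0) \<longrightarrow> x = (\<lambda>_. 0))"

definition bounded_op :: "op \<Rightarrow> bool" where
  "bounded_op T \<longleftrightarrow>
     (\<forall>x\<in>l2. T x \<in> l2) \<and>
     (\<forall>x\<in>l2. \<forall>y\<in>l2. \<forall>a b. T (\<lambda>n. a * x n + b * y n) = (\<lambda>n. a * T x n + b * T y n)) \<and>
     (\<exists>K. \<forall>x\<in>l2. norm_l2 (T x) \<le> K * norm_l2 x)"

definition opnorm :: "op \<Rightarrow> real" where
  "opnorm T = Sup {norm_l2 (T x) | x. x \<in> l2 \<and> norm_l2 x \<le> 1}"

definition op_diff :: "op \<Rightarrow> op \<Rightarrow> op" where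
  "op_diff A B = (\<lambda>x n. A x n - B x n)"

definition op_rank_le :: "op \<Rightarrow> nat \<Rightarrow> bool" where
  "op_rank_le F k \<longleftrightarrow> (\<exists>v :: nat \<Rightarrow> vec. (\<forall>i<k. v i \<in> l2) \<and>
       (\<forall>x\<in>l2. \<exists>c :: nat \<Rightarrow> complex. F x = (\<lambda>n. \<Sum>i<k. c i * v i n)))"

text \<open>Singular values s_0 \<ge> s_1 \<ge> ..., as approximation numbers
  s_k(T) = inf { ||T - F|| : rank F \<le> k } (these coincide with the singular values
  for compact operators on a Hilbert space).\<close>
definition sing_val :: "op \<Rightarrow> nat \<Rightarrow> real" where
  "sing_val T k = Inf {opnorm (op_diff T F) | F. bounded_op F \<and> op_rank_le F k}"

definition schatten_class :: "real \<Rightarrow> op \<Rightarrow> bool" where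
  "schatten_class s T \<longleftrightarrow> bounded_op T \<and> summable (\<lambda>k. sing_val T k powr s)"

definition schatten_norm :: "real \<Rightarrow> op \<Rightarrow> real" where
  "schatten_norm s T = (\<Sum>k. sing_val T k powr s) powr (1 / s)"

definition schatten_sums :: "real \<Rightarrow> (nat \<Rightarrow> op) \<Rightarrow> op \<Rightarrow> bool" where
  "schatten_sums s A S \<longleftrightarrow> schatten_class s S \<and> (\<forall>i. schatten_class s (A i)) \<and>
     (\<lambda>N. schatten_norm s (op_diff S (\<lambda>x n. \<Sum>i<N. A i x n))) \<longlonglongrightarrow> 0"

definition tensor :: "vec \<Rightarrow> vec \<Rightarrow> op" where
  "tensor g f = (\<lambda>h n. inner_l2 h g * f n)"

text \<open>Continuous functional calculus for a self-adjoint operator A, whose spectrum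
  lies in [m, M] with m, M the bounds of its numerical range: f(A) is the (unique,
  for f continuous on [m,M]) bounded operator B with ||p(A) - B|| \<le> sup_[m,M] |p - f|
  for every real polynomial p.\<close>
definition num_lo :: "op \<Rightarrow> real" where
  "num_lo A = Inf {Re (inner_l2 (A x) x) | x. x \<in> l2 \<and> norm_l2 x = 1}"

definition num_hi :: "op \<Rightarrow> real" where
  "num_hi A = Sup {Re (inner_l2 (A x) x) | x. x \<in> l2 \<and> norm_l2 x = 1}"

definition poly_real :: "real list \<Rightarrow> real \<Rightarrow> real" where
  "poly_real c t = (\<Sum>i<length c. c ! i * t ^ i)"

definition poly_op :: "real list \<Rightarrow> op \<Rightarrow> op" where
  "poly_op c A = (\<lambda>x n. \<Sum>i<length c. complex_of_real (c ! i) * (A ^^ i) x n)"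

definition op_fun :: "(real \<Rightarrow> real) \<Rightarrow> op \<Rightarrow> op" where
  "op_fun f A = (THE B. bounded_op B \<and> (\<forall>x. x \<notin> l2 \<longrightarrow> B x = (\<lambda>_. 0)) \<and>
      (\<forall>c. opnorm (op_diff (poly_op c A) B)
             \<le> (SUP t\<in>{num_lo A..num_hi A}. \<bar>poly_real c t - f t\<bar>)))"

definition op_powr :: "op \<Rightarrow> real \<Rightarrow> op" where
  "op_powr A a = op_fun (\<lambda>t. t powr a) A"

end

theory Submission
  imports "HOL-Analysis.Analysis" Defs
begin


lemma l2_iff: "x \<in> l2 \<longleftrightarrow> summable (\<lambda>n. (cmod (x n))\<^sup>2)" by (simp add: l2_def)

lemma prod_le_sq: "cmod a * cmod b \<le> ((cmod a)\<^sup>2 + (cmod b)\<^sup>2) / 2"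
proof -
  have "0 \<le> (cmod a - cmod b)\<^sup>2" by simp
  thus ?thesis by (simp add: power2_eq_square algebra_simps)
qed

lemma l2_summable_prod: assumes "x \<in> l2" "y \<in> l2"
  shows "summable (\<lambda>n. cmod (x n) * cmod (y n))"
proof (rule summable_comparison_test[where g="\<lambda>n. ((cmod (x n))\<^sup>2 + (cmod (y n))\<^sup>2) / 2"])
  show "\<exists>N. \<forall>n\<ge>N. norm (cmod (x n) * cmod (y n)) \<le> ((cmod (x n))\<^sup>2 + (cmod (y n))\<^sup>2) / 2"
    using prod_le_sq by auto
  show "summable (\<lambda>n. ((cmod (x n))\<^sup>2 + (cmod (y n))\<^sup>2) / 2)"
    using assms by (intro summable_divide summable_add) (auto simp: l2_iff)
qed

lemma l2_summable_inner: assumes "x \<in> l2" "y \<in> l2"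
  shows "summable (\<lambda>n. x n * cnj (y n))"
  by (rule summable_norm_cancel) (simp add: norm_mult l2_summable_prod[OF assms])

lemma l2_zero[simp]: "(\<lambda>_. 0) \<in> l2" by (simp add: l2_iff)

lemma l2_add: assumes "x \<in> l2" "y \<in> l2" shows "(\<lambda>n. x n + y n) \<in> l2"
  unfolding l2_iff
proof (rule summable_comparison_test[where g="\<lambda>n. 2 * (cmod (x n))\<^sup>2 + 2 * (cmod (y n))\<^sup>2"])
  have "(cmod (x n + y n))\<^sup>2 \<le> 2 * (cmod (x n))\<^sup>2 + 2 * (cmod (y n))\<^sup>2" for n
  proof -
    have "cmod (x n + y n) \<le> cmod (x n) + cmod (y n)" by (rule norm_triangle_ineq)
    hence "(cmod (x n + y n))\<^sup>2 \<le> (cmod (x n) + cmod (y n))\<^sup>2" by (simp add: power_mono)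
    also have "\<dots> \<le> 2 * (cmod (x n))\<^sup>2 + 2 * (cmod (y n))\<^sup>2"
      using prod_le_sq[of "x n" "y n"] by (simp add: power2_eq_square algebra_simps)
    finally show ?thesis .
  qed
  thus "\<exists>N. \<forall>n\<ge>N. norm ((cmod (x n + y n))\<^sup>2) \<le> 2 * (cmod (x n))\<^sup>2 + 2 * (cmod (y n))\<^sup>2" by auto
  show "summable (\<lambda>n. 2 * (cmod (x n))\<^sup>2 + 2 * (cmod (y n))\<^sup>2)"
    using assms by (intro summable_mult summable_add) (auto simp: l2_iff)
qed

lemma l2_scale: assumes "x \<in> l2" shows "(\<lambda>n. a * x n) \<in> l2"
  using summable_mult[of "\<lambda>n. (cmod (x n))\<^sup>2" "(cmod a)\<^sup>2"] assms
  by (simp add: l2_iff norm_mult power_mult_distrib)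

lemma l2_lin: assumes "x \<in> l2" "y \<in> l2" shows "(\<lambda>n. a * x n + b * y n) \<in> l2"
  using l2_add[OF l2_scale[OF assms(1)] l2_scale[OF assms(2)]] .

lemma l2_diff: assumes "x \<in> l2" "y \<in> l2" shows "(\<lambda>n. x n - y n) \<in> l2"
  using l2_lin[OF assms, of 1 "-1"] by simp

lemma l2_sum: assumes "\<And>i. i \<in> I \<Longrightarrow> v i \<in> l2" shows "(\<lambda>n. \<Sum>i\<in>I. v i n) \<in> l2"
  using assms
proof (induction I rule: infinite_finite_induct)
  case (insert i F) thus ?case using l2_add[of "v i" "\<lambda>n. \<Sum>i\<in>F. v i n"] by auto
qed auto

lemma i2_add_left: assumes "x \<in> l2" "y \<in> l2" "z \<in> l2"
  shows "inner_l2 (\<lambda>n. x n + y n) z = inner_l2 x z + inner_l2 y z"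
  unfolding inner_l2_def using suminf_add[OF l2_summable_inner[OF assms(1,3)] l2_summable_inner[OF assms(2,3)]]
  by (simp add: distrib_right)

lemma i2_scale_left: assumes "x \<in> l2" "z \<in> l2" shows "inner_l2 (\<lambda>n. a * x n) z = a * inner_l2 x z"
  unfolding inner_l2_def using suminf_mult[OF l2_summable_inner[OF assms], of a] by (simp add: mult.assoc)

lemma i2_lin_left: assumes "x \<in> l2" "y \<in> l2" "z \<in> l2"
  shows "inner_l2 (\<lambda>n. a * x n + b * y n) z = a * inner_l2 x z + b * inner_l2 y z"
  by (simp add: i2_add_left[OF l2_scale[OF assms(1)] l2_scale[OF assms(2)] assms(3)] i2_scale_left assms)

lemma i2_commute: assumes "x \<in> l2" "y \<in> l2" shows "inner_l2 y x = cnj (inner_l2 x y)"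
proof -
  have "(\<lambda>n. y n * cnj (x n)) = (\<lambda>n. cnj (x n * cnj (y n)))" by auto
  moreover have "(\<lambda>n. cnj (x n * cnj (y n))) sums cnj (inner_l2 x y)"
    unfolding sums_cnj inner_l2_def using l2_summable_inner[OF assms] by (simp add: summable_sums)
  ultimately show ?thesis unfolding inner_l2_def by (simp add: sums_iff)
qed

lemma i2_self: assumes "x \<in> l2" shows "inner_l2 x x = complex_of_real ((norm_l2 x)\<^sup>2)"
proof -
  have s: "summable (\<lambda>n. (cmod (x n))\<^sup>2)" using assms by (simp add: l2_iff)
  have "(\<lambda>n. x n * cnj (x n)) = (\<lambda>n. complex_of_real ((cmod (x n))\<^sup>2))"
    by (rule ext) (metis complex_norm_square)
  hence "inner_l2 x x = (\<Sum>n. complex_of_real ((cmod (x n))\<^sup>2))" by (simp add: inner_l2_def)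
  also have "\<dots> = complex_of_real (\<Sum>n. (cmod (x n))\<^sup>2)" by (rule suminf_of_real[OF s, symmetric])
  also have "(\<Sum>n. (cmod (x n))\<^sup>2) = (norm_l2 x)\<^sup>2"
    proof -
    have "0 \<le> (\<Sum>n. (cmod (x n))\<^sup>2)" by (rule suminf_nonneg[OF s]) simp
    thus ?thesis unfolding norm_l2_def by (simp add: real_sqrt_pow2)
  qed
  finally show ?thesis .
qed

lemma norm_l2_sq: assumes "x \<in> l2" shows "(norm_l2 x)\<^sup>2 = (\<Sum>n. (cmod (x n))\<^sup>2)"
proof -
  have s: "summable (\<lambda>n. (cmod (x n))\<^sup>2)" using assms by (simp add: l2_iff)
  have "0 \<le> (\<Sum>n. (cmod (x n))\<^sup>2)" by (rule suminf_nonneg[OF s]) simp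
  thus ?thesis unfolding norm_l2_def by simp
qed

lemma norm_l2_nonneg: assumes "x \<in> l2" shows "0 \<le> norm_l2 x"
proof -
  have s: "summable (\<lambda>n. (cmod (x n))\<^sup>2)" using assms by (simp add: l2_iff)
  have "0 \<le> (\<Sum>n. (cmod (x n))\<^sup>2)" by (rule suminf_nonneg[OF s]) simp
  thus ?thesis unfolding norm_l2_def by simp
qed

lemma i2_lin_right: assumes "x \<in> l2" "y \<in> l2" "z \<in> l2"
  shows "inner_l2 z (\<lambda>n. a * x n + b * y n) = cnj a * inner_l2 z x + cnj b * inner_l2 z y"
proof -
  have "inner_l2 z (\<lambda>n. a * x n + b * y n) = cnj (inner_l2 (\<lambda>n. a * x n + b * y n) z)"
    by (rule i2_commute) (auto intro: l2_lin assms)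
  also have "\<dots> = cnj a * cnj (inner_l2 x z) + cnj b * cnj (inner_l2 y z)"
    by (simp add: i2_lin_left assms)
  also have "\<dots> = cnj a * inner_l2 z x + cnj b * inner_l2 z y"
    using i2_commute[OF assms(3) assms(1)] i2_commute[OF assms(3) assms(2)] by simp
  finally show ?thesis .
qed

lemma i2_diff_left: assumes "x \<in> l2" "y \<in> l2" "z \<in> l2"
  shows "inner_l2 (\<lambda>n. x n - y n) z = inner_l2 x z - inner_l2 y z"
  using i2_lin_left[OF assms, of 1 "-1"] by simp

lemma i2_diff_right: assumes "x \<in> l2" "y \<in> l2" "z \<in> l2"
  shows "inner_l2 z (\<lambda>n. x n - y n) = inner_l2 z x - inner_l2 z y"
  using i2_lin_right[OF assms, of 1 "-1"] by simp

lemma i2_sum_left: assumes "\<And>i. i \<in> I \<Longrightarrow> v i \<in> l2" "z \<in> l2"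
  shows "inner_l2 (\<lambda>n. \<Sum>i\<in>I. a i * v i n) z = (\<Sum>i\<in>I. a i * inner_l2 (v i) z)"
  using assms
proof (induction I rule: infinite_finite_induct)
  case (infinite I) thus ?case by (simp add: inner_l2_def)
next
  case empty thus ?case by (simp add: inner_l2_def)
next
  case (insert j F)
  have vj: "v j \<in> l2" using insert.prems by simp
  have vF: "(\<lambda>n. \<Sum>i\<in>F. a i * v i n) \<in> l2"
    by (rule l2_sum, rule l2_scale) (use insert.prems in simp)
  have IH: "inner_l2 (\<lambda>n. \<Sum>i\<in>F. a i * v i n) z = (\<Sum>i\<in>F. a i * inner_l2 (v i) z)"
    by (rule insert.IH) (use insert.prems in auto)
  have e: "(\<lambda>n. \<Sum>i\<in>insert j F. a i * v i n) = (\<lambda>n. a j * v j n + 1 * (\<Sum>i\<in>F. a i * v i n))"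
    using insert.hyps by simp
  have "inner_l2 (\<lambda>n. a j * v j n + 1 * (\<Sum>i\<in>F. a i * v i n)) z
      = a j * inner_l2 (v j) z + 1 * inner_l2 (\<lambda>n. \<Sum>i\<in>F. a i * v i n) z"
    by (rule i2_lin_left[OF vj vF insert.prems(2)])
  thus ?case unfolding e IH using insert.hyps by simp
qed

lemma i2_sum_right: assumes "\<And>i. i \<in> I \<Longrightarrow> v i \<in> l2" "z \<in> l2"
  shows "inner_l2 z (\<lambda>n. \<Sum>i\<in>I. a i * v i n) = (\<Sum>i\<in>I. cnj (a i) * inner_l2 z (v i))"
proof -
  have "inner_l2 z (\<lambda>n. \<Sum>i\<in>I. a i * v i n) = cnj (inner_l2 (\<lambda>n. \<Sum>i\<in>I. a i * v i n) z)"
    by (rule i2_commute) (auto intro!: l2_sum l2_scale assms)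
  also have "\<dots> = (\<Sum>i\<in>I. cnj (a i) * cnj (inner_l2 (v i) z))" using i2_sum_left[OF assms, where a=a] by simp
  also have "\<dots> = (\<Sum>i\<in>I. cnj (a i) * inner_l2 z (v i))"
    by (rule sum.cong) (use i2_commute[OF assms(2)] assms(1) in auto)
  finally show ?thesis .
qed

lemma norm_sq_inner: assumes "x \<in> l2" shows "(norm_l2 x)\<^sup>2 = Re (inner_l2 x x)"
  by (simp add: i2_self assms)

definition orthon :: "(nat \<Rightarrow> vec) \<Rightarrow> bool" where
  "orthon u \<longleftrightarrow> (\<forall>n. u n \<in> l2) \<and> (\<forall>m n. inner_l2 (u m) (u n) = (if m = n then 1 else 0))"

lemma onb_orthonormal: "orthonormal_basis u \<Longrightarrow> orthon u"
  by (simp add: orthonormal_basis_def orthon_def)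

lemma bessel_finite: assumes "orthon u" "h \<in> l2"
  shows "(\<Sum>i<N. (cmod (inner_l2 h (u i)))\<^sup>2) \<le> (norm_l2 h)\<^sup>2"
proof -
  have ul2: "\<And>i. u i \<in> l2" and uo: "\<And>i j. inner_l2 (u i) (u j) = (if i = j then 1 else 0)"
    using assms(1) by (auto simp: orthon_def)
  define c where "c i = inner_l2 h (u i)" for i
  define p where "p = (\<lambda>n. \<Sum>i<N. c i * u i n)"
  define w where "w = (\<lambda>n. h n - p n)"
  have pl2: "p \<in> l2" unfolding p_def by (auto intro!: l2_sum l2_scale ul2)
  have wl2: "w \<in> l2" unfolding w_def by (rule l2_diff[OF assms(2) pl2])
  have "inner_l2 (u j) p = cnj (c j)" if "j < N" for j
  proof -
    have "inner_l2 (u j) p = (\<Sum>i<N. cnj (c i) * inner_l2 (u j) (u i))"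
      unfolding p_def by (rule i2_sum_right) (auto simp: ul2)
    also have "\<dots> = (\<Sum>i<N. if i = j then cnj (c i) else 0)" by (rule sum.cong) (auto simp: uo)
    also have "\<dots> = cnj (c j)" using that by simp
    finally show ?thesis .
  qed
  hence uw: "inner_l2 (u j) w = 0" if "j < N" for j
    using that unfolding w_def
    by (simp add: i2_diff_right[OF assms(2) pl2 ul2] c_def i2_commute[OF ul2 assms(2)])
  have pw: "inner_l2 p w = 0"
  proof -
    have "inner_l2 p w = (\<Sum>i<N. c i * inner_l2 (u i) w)" unfolding p_def
      by (rule i2_sum_left) (auto simp: ul2 wl2)
    thus ?thesis using uw by simp
  qed
  have hp: "inner_l2 h p = (\<Sum>i<N. complex_of_real ((cmod (c i))\<^sup>2))"
  proof -
    have "inner_l2 h p = (\<Sum>i<N. cnj (c i) * inner_l2 h (u i))" unfolding p_def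
      by (rule i2_sum_right) (auto simp: ul2 assms)
    thus ?thesis by (simp add: c_def complex_norm_square[symmetric] mult.commute del: of_real_power)
  qed
  have "inner_l2 w w = inner_l2 h w - inner_l2 p w"
    using i2_diff_left[OF assms(2) pl2 wl2] by (simp add: w_def)
  also have "\<dots> = inner_l2 h w" using pw by simp
  also have "\<dots> = inner_l2 h h - inner_l2 h p"
    using i2_diff_right[OF assms(2) pl2 assms(2)] by (simp add: w_def)
  finally have "Re (inner_l2 w w) = (norm_l2 h)\<^sup>2 - (\<Sum>i<N. (cmod (c i))\<^sup>2)"
    using hp by (simp add: i2_self assms)
  moreover have "0 \<le> Re (inner_l2 w w)" using norm_sq_inner[OF wl2] by (metis zero_le_power2)
  ultimately show ?thesis by (simp add: c_def)
qed

lemma bessel: assumes "orthon u" "h \<in> l2"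
  shows "summable (\<lambda>i. (cmod (inner_l2 h (u i)))\<^sup>2)"
    and "(\<Sum>i. (cmod (inner_l2 h (u i)))\<^sup>2) \<le> (norm_l2 h)\<^sup>2"
proof -
  show s: "summable (\<lambda>i. (cmod (inner_l2 h (u i)))\<^sup>2)"
    by (rule summableI_nonneg_bounded[where x="(norm_l2 h)\<^sup>2"]) (use bessel_finite[OF assms] in auto)
  show "(\<Sum>i. (cmod (inner_l2 h (u i)))\<^sup>2) \<le> (norm_l2 h)\<^sup>2"
    by (rule suminf_le_const[OF s]) (use bessel_finite[OF assms] in auto)
qed



lemma cs_series: fixes a b :: "nat \<Rightarrow> real"
  assumes "summable (\<lambda>n. (a n)\<^sup>2)" "summable (\<lambda>n. (b n)\<^sup>2)"
  shows "summable (\<lambda>n. \<bar>a n * b n\<bar>)"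
    and "(\<Sum>n. \<bar>a n * b n\<bar>) \<le> sqrt (\<Sum>n. (a n)\<^sup>2) * sqrt (\<Sum>n. (b n)\<^sup>2)"
proof -
  have pt: "\<bar>a n * b n\<bar> \<le> ((a n)\<^sup>2 + (b n)\<^sup>2) / 2" for n
  proof -
    have "0 \<le> (\<bar>a n\<bar> - \<bar>b n\<bar>)\<^sup>2" by simp
    thus ?thesis by (simp add: power2_eq_square algebra_simps abs_mult)
  qed
  show s: "summable (\<lambda>n. \<bar>a n * b n\<bar>)"
    by (rule summable_comparison_test[where g="\<lambda>n. ((a n)\<^sup>2 + (b n)\<^sup>2) / 2"])
       (use pt assms in \<open>auto intro!: summable_divide summable_add\<close>)
  show "(\<Sum>n. \<bar>a n * b n\<bar>) \<le> sqrt (\<Sum>n. (a n)\<^sup>2) * sqrt (\<Sum>n. (b n)\<^sup>2)"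
  proof (rule suminf_le_const[OF s])
    fix N
    have "(\<Sum>n<N. \<bar>a n\<bar> * \<bar>b n\<bar>)\<^sup>2 \<le> (\<Sum>n<N. \<bar>a n\<bar>\<^sup>2) * (\<Sum>n<N. \<bar>b n\<bar>\<^sup>2)"
      by (rule Cauchy_Schwarz_ineq_sum)
    also have "\<dots> \<le> (\<Sum>n. (a n)\<^sup>2) * (\<Sum>n. (b n)\<^sup>2)"
      by (rule mult_mono) (auto intro!: sum_le_suminf assms sum_nonneg suminf_nonneg)
    finally have "(\<Sum>n<N. \<bar>a n * b n\<bar>) \<le> sqrt ((\<Sum>n. (a n)\<^sup>2) * (\<Sum>n. (b n)\<^sup>2))"
      by (simp add: abs_mult real_le_rsqrt)
    thus "(\<Sum>n<N. \<bar>a n * b n\<bar>) \<le> sqrt (\<Sum>n. (a n)\<^sup>2) * sqrt (\<Sum>n. (b n)\<^sup>2)"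
      by (simp add: real_sqrt_mult)
  qed
qed

definition phi :: "(nat \<Rightarrow> vec) \<Rightarrow> (nat \<Rightarrow> complex) \<Rightarrow> vec \<Rightarrow> complex" where
  "phi f D h = (\<Sum>n. D n * inner_l2 h (f n))"

lemma phi_summable: assumes "orthon f" "summable (\<lambda>n. (cmod (D n))\<^sup>2)" "h \<in> l2"
  shows "summable (\<lambda>n. D n * inner_l2 h (f n))"
    and "cmod (phi f D h) \<le> sqrt (\<Sum>n. (cmod (D n))\<^sup>2) * norm_l2 h"
proof -
  note b = bessel[OF assms(1) assms(3)]
  note c = cs_series[OF assms(2) b(1)]
  show s: "summable (\<lambda>n. D n * inner_l2 h (f n))"
    by (rule summable_norm_cancel) (use c(1) in \<open>simp add: norm_mult abs_mult\<close>)
  have "cmod (phi f D h) \<le> (\<Sum>n. cmod (D n * inner_l2 h (f n)))"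
    unfolding phi_def by (rule summable_norm) (use c(1) in \<open>simp add: norm_mult abs_mult\<close>)
  also have "\<dots> \<le> sqrt (\<Sum>n. (cmod (D n))\<^sup>2) * sqrt (\<Sum>n. (cmod (inner_l2 h (f n)))\<^sup>2)"
    using c(2) by (simp add: norm_mult abs_mult)
  also have "\<dots> \<le> sqrt (\<Sum>n. (cmod (D n))\<^sup>2) * norm_l2 h"
  proof (rule mult_left_mono)
    show "sqrt (\<Sum>n. (cmod (inner_l2 h (f n)))\<^sup>2) \<le> norm_l2 h"
      using b(2) norm_l2_nonneg[OF assms(3)] real_sqrt_le_mono by fastforce
    show "0 \<le> sqrt (\<Sum>n. (cmod (D n))\<^sup>2)" using suminf_nonneg[OF assms(2)] by simp
  qed
  finally show "cmod (phi f D h) \<le> sqrt (\<Sum>n. (cmod (D n))\<^sup>2) * norm_l2 h" .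
qed

lemma phi_lin: assumes "orthon f" "summable (\<lambda>n. (cmod (D n))\<^sup>2)" "x \<in> l2" "y \<in> l2"
  shows "phi f D (\<lambda>n. a * x n + b * y n) = a * phi f D x + b * phi f D y"
proof -
  have fl2: "f n \<in> l2" for n using assms(1) by (simp add: orthon_def)
  have "phi f D (\<lambda>n. a * x n + b * y n) = (\<Sum>n. a * (D n * inner_l2 x (f n)) + b * (D n * inner_l2 y (f n)))"
    unfolding phi_def by (simp add: i2_lin_left[OF assms(3,4) fl2] algebra_simps)
  also have "\<dots> = (\<Sum>n. a * (D n * inner_l2 x (f n))) + (\<Sum>n. b * (D n * inner_l2 y (f n)))"
    by (rule suminf_add[symmetric]) (auto intro!: summable_mult phi_summable assms)
  also have "\<dots> = a * phi f D x + b * phi f D y"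
    unfolding phi_def using suminf_mult[OF phi_summable(1)[OF assms(1,2,3)], of a]
      suminf_mult[OF phi_summable(1)[OF assms(1,2,4)], of b] by simp
  finally show ?thesis .
qed

lemma norm_l2_scale: assumes "x \<in> l2" shows "norm_l2 (\<lambda>n. a * x n) = cmod a * norm_l2 x"
proof -
  have s: "summable (\<lambda>n. (cmod (x n))\<^sup>2)" using assms by (simp add: l2_iff)
  have "(\<Sum>n. (cmod (a * x n))\<^sup>2) = (cmod a)\<^sup>2 * (\<Sum>n. (cmod (x n))\<^sup>2)"
    by (simp add: norm_mult power_mult_distrib suminf_mult[OF s])
  thus ?thesis unfolding norm_l2_def by (simp add: real_sqrt_mult)
qed

lemma norm_l2_zero[simp]: "norm_l2 (\<lambda>_. 0) = 0" by (simp add: norm_l2_def)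

lemma norm_diff_sq: assumes "x \<in> l2" "y \<in> l2"
  shows "(norm_l2 (\<lambda>n. x n - y n))\<^sup>2 \<le> 2 * (norm_l2 x)\<^sup>2 + 2 * (norm_l2 y)\<^sup>2"
proof -
  have sx: "summable (\<lambda>n. (cmod (x n))\<^sup>2)" and sy: "summable (\<lambda>n. (cmod (y n))\<^sup>2)"
    using assms by (auto simp: l2_iff)
  have sd: "summable (\<lambda>n. (cmod (x n - y n))\<^sup>2)" using l2_diff[OF assms] by (simp add: l2_iff)
  have pt: "(cmod (x n - y n))\<^sup>2 \<le> 2 * (cmod (x n))\<^sup>2 + 2 * (cmod (y n))\<^sup>2" for n
  proof -
    have "cmod (x n - y n) \<le> cmod (x n) + cmod (y n)" by (rule norm_triangle_ineq4)
    hence "(cmod (x n - y n))\<^sup>2 \<le> (cmod (x n) + cmod (y n))\<^sup>2" by (simp add: power_mono)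
    also have "\<dots> \<le> 2 * (cmod (x n))\<^sup>2 + 2 * (cmod (y n))\<^sup>2"
      using prod_le_sq[of "x n" "y n"] by (simp add: power2_eq_square algebra_simps)
    finally show ?thesis .
  qed
  have "(\<Sum>n. (cmod (x n - y n))\<^sup>2) \<le> (\<Sum>n. 2 * (cmod (x n))\<^sup>2 + 2 * (cmod (y n))\<^sup>2)"
    by (rule suminf_le[OF pt sd]) (intro summable_add summable_mult sx sy)
  also have "\<dots> = 2 * (\<Sum>n. (cmod (x n))\<^sup>2) + 2 * (\<Sum>n. (cmod (y n))\<^sup>2)"
    using suminf_add[OF summable_mult[OF sx] summable_mult[OF sy]] suminf_mult[OF sx] suminf_mult[OF sy]
    by metis
  finally show ?thesis
    using norm_l2_sq[OF assms(1)] norm_l2_sq[OF assms(2)] norm_l2_sq[OF l2_diff[OF assms]] by simp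
qed



definition pbound :: "op \<Rightarrow> real \<Rightarrow> bool" where
  "pbound T K \<longleftrightarrow> (\<forall>x\<in>l2. T x \<in> l2) \<and> (\<forall>x\<in>l2. norm_l2 x \<le> 1 \<longrightarrow> norm_l2 (T x) \<le> K)"

lemma opnorm_le: assumes "\<And>x. x \<in> l2 \<Longrightarrow> norm_l2 x \<le> 1 \<Longrightarrow> norm_l2 (T x) \<le> K"
  shows "opnorm T \<le> K"
  unfolding opnorm_def
proof (rule cSup_least)
  show "{norm_l2 (T x) |x. x \<in> l2 \<and> norm_l2 x \<le> 1} \<noteq> {}"
    using l2_zero norm_l2_zero by (metis (mono_tags, lifting) empty_Collect_eq zero_le_one)
qed (use assms in auto)

lemma opnorm_upper: assumes "pbound T K" "x \<in> l2" "norm_l2 x \<le> 1"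
  shows "norm_l2 (T x) \<le> opnorm T"
  unfolding opnorm_def
  by (rule cSup_upper) (use assms in \<open>auto simp: pbound_def bdd_above_def\<close>)

lemma opnorm_nonneg: assumes "pbound T K" shows "0 \<le> opnorm T"
proof -
  have "0 \<le> norm_l2 (T (\<lambda>_. 0))" using assms norm_l2_nonneg by (auto simp: pbound_def)
  also have "\<dots> \<le> opnorm T" by (rule opnorm_upper[OF assms]) auto
  finally show ?thesis .
qed

lemma bounded_pbound: assumes "bounded_op T" shows "\<exists>K. pbound T K"
proof -
  obtain K where K: "\<And>x. x \<in> l2 \<Longrightarrow> norm_l2 (T x) \<le> K * norm_l2 x" and l: "\<And>x. x\<in>l2 \<Longrightarrow> T x \<in> l2"
    using assms unfolding bounded_op_def by blast
  have "pbound T (max K 0)" unfolding pbound_def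
  proof (intro conjI ballI impI)
    fix x assume x: "x \<in> l2" "norm_l2 x \<le> 1"
    have "K * norm_l2 x \<le> max K 0 * norm_l2 x" by (rule mult_right_mono) (auto simp: norm_l2_nonneg x)
    also have "\<dots> \<le> max K 0" using x by (simp add: mult_left_le norm_l2_nonneg)
    finally show "norm_l2 (T x) \<le> max K 0" using K[OF x(1)] by linarith
  qed (use l in auto)
  thus ?thesis by blast
qed

lemma diff_pbound: assumes "pbound T K1" "pbound F K2"
  shows "pbound (op_diff T F) (sqrt (2 * K1\<^sup>2 + 2 * K2\<^sup>2))"
  unfolding pbound_def
proof (intro conjI ballI impI)
  fix x assume x: "x \<in> l2"
  show "op_diff T F x \<in> l2" using assms x unfolding op_diff_def pbound_def by (auto intro: l2_diff)
next
  fix x assume x: "x \<in> l2" "norm_l2 x \<le> 1"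
  have t: "T x \<in> l2" "F x \<in> l2" and b: "norm_l2 (T x) \<le> K1" "norm_l2 (F x) \<le> K2"
    using assms x unfolding pbound_def by auto
  have "(norm_l2 (op_diff T F x))\<^sup>2 \<le> 2 * (norm_l2 (T x))\<^sup>2 + 2 * (norm_l2 (F x))\<^sup>2"
    unfolding op_diff_def by (rule norm_diff_sq[OF t])
  also have "\<dots> \<le> 2 * K1\<^sup>2 + 2 * K2\<^sup>2"
    using b power_mono norm_l2_nonneg[OF t(1)] norm_l2_nonneg[OF t(2)]
    by (metis add_mono mult_left_mono zero_le_numeral)
  finally show "norm_l2 (op_diff T F x) \<le> sqrt (2 * K1\<^sup>2 + 2 * K2\<^sup>2)"
    by (simp add: real_le_rsqrt)
qed

lemma opnorm_cong: assumes "\<And>x. x \<in> l2 \<Longrightarrow> T x = T' x" shows "opnorm T = opnorm T'"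
proof -
  have "{norm_l2 (T x) |x. x \<in> l2 \<and> norm_l2 x \<le> 1} = {norm_l2 (T' x) |x. x \<in> l2 \<and> norm_l2 x \<le> 1}"
    using assms by metis
  thus ?thesis by (simp add: opnorm_def)
qed

lemma opnorm_zero: assumes "\<And>x. x \<in> l2 \<Longrightarrow> T x = (\<lambda>_. 0)" shows "opnorm T = 0"
proof -
  have "opnorm T = opnorm (\<lambda>x n. 0)" by (rule opnorm_cong) (use assms in auto)
  also have "\<dots> = 0"
  proof (rule antisym)
    show "opnorm (\<lambda>x n. 0) \<le> 0" by (rule opnorm_le) simp
    show "0 \<le> opnorm (\<lambda>x n. 0)" by (rule opnorm_nonneg[of _ 0]) (simp add: pbound_def)
  qed
  finally show ?thesis .
qed

lemma rank1_schatten: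
  assumes "0 < s" "u \<in> l2" "bounded_op T" "\<And>x. x \<in> l2 \<Longrightarrow> T x = (\<lambda>m. c x * u m)"
  shows "schatten_class s T" "schatten_norm s T = opnorm T" "0 \<le> opnorm T"
proof -
  obtain K where K: "pbound T K" using bounded_pbound[OF assms(3)] by blast
  show on: "0 \<le> opnorm T" by (rule opnorm_nonneg[OF K])
  have zb: "bounded_op (\<lambda>x n. 0)" unfolding bounded_op_def by (auto intro!: exI[of _ 0])
  have sv0: "sing_val T 0 = opnorm T"
  proof -
    have "{opnorm (op_diff T F) | F. bounded_op F \<and> op_rank_le F 0} = {opnorm T}"
    proof (intro equalityI subsetI)
      fix y assume "y \<in> {opnorm (op_diff T F) | F. bounded_op F \<and> op_rank_le F 0}"
      then obtain F where y: "y = opnorm (op_diff T F)" "op_rank_le F 0" by blast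
      have "opnorm (op_diff T F) = opnorm T"
        by (rule opnorm_cong) (use y(2) in \<open>auto simp: op_rank_le_def op_diff_def\<close>)
      thus "y \<in> {opnorm T}" using y by simp
    next
      fix y assume "y \<in> {opnorm T}"
      moreover have "opnorm (op_diff T (\<lambda>x n. 0)) = opnorm T" by (simp add: op_diff_def)
      moreover have "op_rank_le (\<lambda>x n. 0) 0" by (simp add: op_rank_le_def)
      ultimately have "y = opnorm (op_diff T (\<lambda>x n. 0)) \<and> bounded_op (\<lambda>x n. 0) \<and> op_rank_le (\<lambda>x n. 0) 0"
        using zb by simp
      thus "y \<in> {opnorm (op_diff T F) | F. bounded_op F \<and> op_rank_le F 0}"
        by (intro CollectI exI)
    qed
    thus ?thesis by (simp add: sing_val_def)
  qed
  have svS: "sing_val T (Suc k) = 0" for k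
  proof -
    have rk: "op_rank_le T (Suc k)" unfolding op_rank_le_def
    proof (intro exI conjI allI impI ballI)
      fix x assume x: "x \<in> l2"
      show "T x = (\<lambda>n. \<Sum>i<Suc k. (if i = 0 then c x else 0) * u n)"
        using assms(4)[OF x] by (simp add: sum.lessThan_Suc_shift del: sum.lessThan_Suc)
    qed (use assms(2) in auto)
    show ?thesis unfolding sing_val_def
    proof (rule cInf_eq_minimum)
      show "0 \<in> {opnorm (op_diff T F) | F. bounded_op F \<and> op_rank_le F (Suc k)}"
        using rk assms(3) opnorm_zero[of "op_diff T T"] by (force simp: op_diff_def)
    next
      fix y assume "y \<in> {opnorm (op_diff T F) | F. bounded_op F \<and> op_rank_le F (Suc k)}"
      then obtain F where y: "y = opnorm (op_diff T F)" "bounded_op F" by blast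
      obtain K2 where "pbound F K2" using bounded_pbound[OF y(2)] by blast
      thus "0 \<le> y" using y(1) opnorm_nonneg diff_pbound[OF K] by metis
    qed
  qed
  have sv: "(\<lambda>k. sing_val T k powr s) = (\<lambda>k. if k = 0 then opnorm T powr s else 0)"
  proof (rule ext)
    fix k show "sing_val T k powr s = (if k = 0 then opnorm T powr s else 0)"
      using sv0 svS by (cases k) auto
  qed
  have sm: "(\<lambda>k. sing_val T k powr s) sums (opnorm T powr s)"
    unfolding sv by (rule sums_single)
  show "schatten_class s T" unfolding schatten_class_def using assms(3) sm by (auto simp: sums_iff)
  show "schatten_norm s T = opnorm T" unfolding schatten_norm_def using sm on assms(1)
    by (simp add: sums_iff powr_powr)
qed



lemma sum_lin2: "(\<Sum>i\<in>I. k i * (a i * X + b i * Y)) = (\<Sum>i\<in>I. k i * a i) * X + (\<Sum>i\<in>I. k i * b i) * (Y::complex)"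
proof -
  have "(\<Sum>i\<in>I. k i * (a i * X + b i * Y)) = (\<Sum>i\<in>I. (k i * a i) * X + (k i * b i) * Y)"
    by (rule sum.cong) (simp_all add: algebra_simps)
  also have "\<dots> = (\<Sum>i\<in>I. k i * a i) * X + (\<Sum>i\<in>I. k i * b i) * Y"
    by (simp add: sum.distrib sum_distrib_right)
  finally show ?thesis .
qed

locale twopt =
  fixes e0 e1 :: vec and eta L :: real
  assumes e0l2: "e0 \<in> l2" and e1l2: "e1 \<in> l2" and e00: "inner_l2 e0 e0 = 1"
    and e11: "inner_l2 e1 e1 = 1" and e10: "inner_l2 e1 e0 = 0"
    and etapos: "0 < eta" and Lpos: "0 < L"
begin

definition Aop :: op where
  "Aop = (\<lambda>x m. complex_of_real eta * x m + complex_of_real L * tensor e0 e0 x m)"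

abbreviation P :: "vec \<Rightarrow> complex" where "P x \<equiv> inner_l2 x e0"

definition G :: "complex \<Rightarrow> complex \<Rightarrow> op" where
  "G a b = (\<lambda>x m. a * x m + b * (P x * e0 m))"

lemma G_l2: "x \<in> l2 \<Longrightarrow> G a b x \<in> l2"
  unfolding G_def using l2_lin[OF _ e0l2, of x a "b * P x"] by (simp add: mult.assoc)

lemma P_G: "x \<in> l2 \<Longrightarrow> P (G a b x) = (a + b) * P x"
proof -
  assume x: "x \<in> l2"
  have "P (G a b x) = P (\<lambda>m. a * x m + (b * P x) * e0 m)" by (simp add: G_def mult.assoc)
  also have "\<dots> = a * P x + (b * P x) * P e0" by (rule i2_lin_left[OF x e0l2 e0l2])
  finally show ?thesis by (simp add: e00 algebra_simps)
qed

lemma G_comp: assumes x: "x \<in> l2" shows "G a b (G c d x) = G (a * c) (a * d + b * (c + d)) x"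
proof (rule ext)
  fix m
  have "G a b (G c d x) m = a * G c d x m + b * (P (G c d x) * e0 m)" by (simp add: G_def)
  also have "\<dots> = a * G c d x m + b * ((c + d) * P x * e0 m)" by (simp add: P_G[OF x])
  finally show "G a b (G c d x) m = G (a * c) (a * d + b * (c + d)) x m" by (simp add: G_def algebra_simps)
qed

lemma A_G: "Aop = G (complex_of_real eta) (complex_of_real L)"
  by (simp add: Aop_def G_def tensor_def)

lemma A_pow: "x \<in> l2 \<Longrightarrow> (Aop ^^ i) x = G (of_real (eta ^ i)) (of_real ((eta + L) ^ i - eta ^ i)) x"
proof (induction i)
  case 0 thus ?case by (simp add: G_def)
next
  case (Suc i)
  have "(Aop ^^ Suc i) x = Aop ((Aop ^^ i) x)" by simp
  also have "\<dots> = G (of_real eta) (of_real L) (G (of_real (eta ^ i)) (of_real ((eta + L) ^ i - eta ^ i)) x)"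
    using Suc by (simp add: A_G)
  also have "\<dots> = G (of_real (eta ^ Suc i)) (of_real ((eta + L) ^ Suc i - eta ^ Suc i)) x"
    by (simp add: G_comp Suc.prems algebra_simps)
  finally show ?case .
qed

lemma pyth: assumes x: "x \<in> l2"
  shows "(norm_l2 (G a b x))\<^sup>2 = (cmod a)\<^sup>2 * ((norm_l2 x)\<^sup>2 - (cmod (P x))\<^sup>2) + (cmod (a + b))\<^sup>2 * (cmod (P x))\<^sup>2"
    and "(cmod (P x))\<^sup>2 \<le> (norm_l2 x)\<^sup>2"
proof -
  define w where "w = (\<lambda>m. x m - P x * e0 m)"
  have wl2: "w \<in> l2" unfolding w_def by (rule l2_diff[OF x l2_scale[OF e0l2]])
  have we: "inner_l2 w e0 = 0" unfolding w_def
    using i2_lin_left[OF x e0l2 e0l2, of 1 "- P x"] by (simp add: e00)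
  have ew: "inner_l2 e0 w = 0" using i2_commute[OF wl2 e0l2] we by simp
  have ww: "inner_l2 w w = of_real ((norm_l2 w)\<^sup>2)" by (rule i2_self[OF wl2])
  have gen: "(norm_l2 (\<lambda>m. c * w m + d * e0 m))\<^sup>2 = (cmod c)\<^sup>2 * (norm_l2 w)\<^sup>2 + (cmod d)\<^sup>2" for c d
  proof -
    have l: "(\<lambda>m. c * w m + d * e0 m) \<in> l2" by (rule l2_lin[OF wl2 e0l2])
    have "inner_l2 (\<lambda>m. c * w m + d * e0 m) (\<lambda>m. c * w m + d * e0 m)
        = c * inner_l2 w (\<lambda>m. c * w m + d * e0 m) + d * inner_l2 e0 (\<lambda>m. c * w m + d * e0 m)"
      by (rule i2_lin_left[OF wl2 e0l2 l])
    also have "\<dots> = c * (cnj c * inner_l2 w w + cnj d * inner_l2 w e0) + d * (cnj c * inner_l2 e0 w + cnj d * inner_l2 e0 e0)"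
      by (simp add: i2_lin_right[OF wl2 e0l2 wl2] i2_lin_right[OF wl2 e0l2 e0l2])
    also have "\<dots> = (c * cnj c) * of_real ((norm_l2 w)\<^sup>2) + d * cnj d"
      by (simp add: we ew ww e00)
    finally have "inner_l2 (\<lambda>m. c * w m + d * e0 m) (\<lambda>m. c * w m + d * e0 m)
       = of_real ((cmod c)\<^sup>2 * (norm_l2 w)\<^sup>2 + (cmod d)\<^sup>2)"
      by (simp add: complex_norm_square[symmetric] del: of_real_power)
    thus ?thesis using norm_sq_inner[OF l] by simp
  qed
  have xw: "x = (\<lambda>m. 1 * w m + P x * e0 m)" by (simp add: w_def)
  have nx: "(norm_l2 x)\<^sup>2 = (norm_l2 w)\<^sup>2 + (cmod (P x))\<^sup>2"
    using gen[of 1 "P x"] xw by simp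
  have gx: "G a b x = (\<lambda>m. a * w m + ((a + b) * P x) * e0 m)"
    by (rule ext) (simp add: G_def w_def algebra_simps)
  show "(norm_l2 (G a b x))\<^sup>2 = (cmod a)\<^sup>2 * ((norm_l2 x)\<^sup>2 - (cmod (P x))\<^sup>2) + (cmod (a + b))\<^sup>2 * (cmod (P x))\<^sup>2"
    unfolding gx gen nx by (simp add: norm_mult power_mult_distrib)
  show "(cmod (P x))\<^sup>2 \<le> (norm_l2 x)\<^sup>2" using nx by simp
qed

lemma G_norm: assumes x: "x \<in> l2"
  shows "norm_l2 (G a b x) \<le> max (cmod a) (cmod (a + b)) * norm_l2 x"
proof -
  let ?M = "max (cmod a) (cmod (a + b))"
  have p: "(cmod (P x))\<^sup>2 \<le> (norm_l2 x)\<^sup>2" by (rule pyth(2)[OF x])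
  have "(norm_l2 (G a b x))\<^sup>2 \<le> ?M\<^sup>2 * ((norm_l2 x)\<^sup>2 - (cmod (P x))\<^sup>2) + ?M\<^sup>2 * (cmod (P x))\<^sup>2"
    unfolding pyth(1)[OF x]
    by (intro add_mono mult_right_mono power_mono) (use p in auto)
  also have "\<dots> = (?M * norm_l2 x)\<^sup>2" by (simp add: algebra_simps power_mult_distrib)
  finally show ?thesis
    using norm_l2_nonneg[OF x] by (meson abs_le_square_iff le_max_iff_disj norm_ge_zero order.trans abs_of_nonneg mult_nonneg_nonneg power2_le_imp_le)
qed

lemma G_lin: assumes "x \<in> l2" "y \<in> l2"
  shows "G a b (\<lambda>n. c * x n + d * y n) = (\<lambda>n. c * G a b x n + d * G a b y n)"
  by (rule ext) (simp add: G_def i2_lin_left[OF assms e0l2] algebra_simps)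

lemma G_bounded: "bounded_op (\<lambda>x. if x \<in> l2 then G a b x else (\<lambda>_. 0))"
  unfolding bounded_op_def
proof (intro conjI ballI allI exI)
  fix x y assume "x \<in> l2" "y \<in> l2"
  fix c d show "(if (\<lambda>n. c * x n + d * y n) \<in> l2 then G a b (\<lambda>n. c * x n + d * y n) else (\<lambda>_. 0)) =
     (\<lambda>n. c * (if x \<in> l2 then G a b x else (\<lambda>_. 0)) n + d * (if y \<in> l2 then G a b y else (\<lambda>_. 0)) n)"
    using G_lin[OF \<open>x \<in> l2\<close> \<open>y \<in> l2\<close>] l2_lin[OF \<open>x \<in> l2\<close> \<open>y \<in> l2\<close>] \<open>x \<in> l2\<close> \<open>y \<in> l2\<close> by simp
next
  fix x assume "x \<in> l2"
  thus "(if x \<in> l2 then G a b x else (\<lambda>_. 0)) \<in> l2" using G_l2 by simp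
  show "norm_l2 (if x \<in> l2 then G a b x else (\<lambda>_. 0)) \<le> max (cmod a) (cmod (a + b)) * norm_l2 x"
    using G_norm \<open>x \<in> l2\<close> by simp
qed

lemma num_range: "num_lo Aop = eta" "num_hi Aop = eta + L"
proof -
  define R where "R = {Re (inner_l2 (Aop x) x) | x. x \<in> l2 \<and> norm_l2 x = 1}"
  have n1: "norm_l2 e0 = 1" "norm_l2 e1 = 1"
    using norm_sq_inner[OF e0l2] norm_sq_inner[OF e1l2] e00 e11 norm_l2_nonneg[OF e0l2] norm_l2_nonneg[OF e1l2]
    by (simp_all add: power2_eq_1_iff)
  have val: "Re (inner_l2 (Aop x) x) = eta * (norm_l2 x)\<^sup>2 + L * (cmod (P x))\<^sup>2" if x: "x \<in> l2" for x
  proof -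
    have "inner_l2 (Aop x) x = inner_l2 (\<lambda>m. of_real eta * x m + (of_real L * P x) * e0 m) x"
      by (simp add: Aop_def tensor_def mult.assoc)
    also have "\<dots> = of_real eta * inner_l2 x x + (of_real L * P x) * inner_l2 e0 x"
      by (rule i2_lin_left[OF x e0l2 x])
    also have "inner_l2 e0 x = cnj (P x)" by (rule i2_commute[OF x e0l2])
    finally show ?thesis by (simp add: i2_self[OF x] mult.assoc complex_norm_square[symmetric] del: of_real_power)
  qed
  have mem: "eta \<in> R" "eta + L \<in> R"
  proof -
    have "Re (inner_l2 (Aop e1) e1) = eta" using val[OF e1l2] n1 e10 by simp
    thus "eta \<in> R" unfolding R_def using e1l2 n1 by force
    have "Re (inner_l2 (Aop e0) e0) = eta + L" using val[OF e0l2] n1 e00 by simp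
    thus "eta + L \<in> R" unfolding R_def using e0l2 n1 by force
  qed
  have bnd: "eta \<le> r \<and> r \<le> eta + L" if "r \<in> R" for r
  proof -
    obtain x where x: "x \<in> l2" "norm_l2 x = 1" "r = Re (inner_l2 (Aop x) x)" using \<open>r \<in> R\<close> R_def by auto
    have "(cmod (P x))\<^sup>2 \<le> 1" using pyth(2)[OF x(1)] x(2) by simp
    thus ?thesis using val[OF x(1)] x Lpos by (simp add: mult_left_le)
  qed
  show "num_lo Aop = eta" unfolding num_lo_def R_def[symmetric]
    by (rule cInf_eq_minimum[OF mem(1)]) (use bnd in auto)
  show "num_hi Aop = eta + L" unfolding num_hi_def R_def[symmetric]
    by (rule cSup_eq_maximum[OF mem(2)]) (use bnd in auto)
qed

lemma poly_op_A: assumes x: "x \<in> l2"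
  shows "poly_op c Aop x = G (of_real (poly_real c eta)) (of_real (poly_real c (eta + L) - poly_real c eta)) x"
proof (rule ext)
  fix n
  have "poly_op c Aop x n = (\<Sum>i<length c. of_real (c ! i) * (of_real (eta ^ i) * x n
          + of_real ((eta + L) ^ i - eta ^ i) * (P x * e0 n)))"
    unfolding poly_op_def by (simp add: A_pow[OF x] G_def)
  also have "\<dots> = (\<Sum>i<length c. of_real (c ! i) * of_real (eta ^ i)) * x n
      + (\<Sum>i<length c. of_real (c ! i) * of_real ((eta + L) ^ i - eta ^ i)) * (P x * e0 n)"
    by (rule sum_lin2)
  also have "(\<Sum>i<length c. of_real (c ! i) * of_real (eta ^ i)) = (of_real (poly_real c eta) :: complex)"
    unfolding poly_real_def of_real_sum of_real_mult ..
  also have "(\<Sum>i<length c. of_real (c ! i) * of_real ((eta + L) ^ i - eta ^ i))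
     = (of_real (poly_real c (eta + L) - poly_real c eta) :: complex)"
    unfolding poly_real_def of_real_diff of_real_sum of_real_mult
    by (simp add: sum_subtractf[symmetric] right_diff_distrib)
  finally show "poly_op c Aop x n = G (of_real (poly_real c eta)) (of_real (poly_real c (eta + L) - poly_real c eta)) x n"
    by (simp add: G_def)
qed

end


lemma l2_zero_norm: assumes "z \<in> l2" "norm_l2 z = 0" shows "z = (\<lambda>_. 0)"
proof -
  have s: "summable (\<lambda>n. (cmod (z n))\<^sup>2)" using assms by (simp add: l2_iff)
  have "(\<Sum>n. (cmod (z n))\<^sup>2) = 0" using norm_l2_sq[OF assms(1)] assms(2) by simp
  hence "\<forall>n. (cmod (z n))\<^sup>2 = 0" using suminf_eq_zero_iff[OF s] by simp
  thus ?thesis by auto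
qed

lemma bounded_scale: assumes "bounded_op B" "x \<in> l2" shows "B (\<lambda>n. r * x n) = (\<lambda>n. r * B x n)"
proof -
  have "B (\<lambda>n. r * x n + 0 * x n) = (\<lambda>n. r * B x n + 0 * B x n)"
    using assms unfolding bounded_op_def by blast
  thus ?thesis by simp
qed

lemma poly_fun_list: assumes "real_polynomial_function p" shows "\<exists>cs. \<forall>t. poly_real cs t = p t"
proof -
  obtain a n where p: "p = (\<lambda>x. \<Sum>i\<le>n. a i * x^i)" using real_polynomial_function_imp_sum[OF assms] by blast
  have "poly_real (map a [0..<Suc n]) t = p t" for t
    unfolding poly_real_def p by (simp add: lessThan_Suc_atMost[symmetric] del: upt_Suc)
  thus ?thesis by blast
qed

context twopt begin

definition Qp :: "(real \<Rightarrow> real) \<Rightarrow> op \<Rightarrow> bool" where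
  "Qp fa B \<longleftrightarrow> bounded_op B \<and> (\<forall>x. x \<notin> l2 \<longrightarrow> B x = (\<lambda>_. 0)) \<and>
      (\<forall>c. opnorm (op_diff (poly_op c Aop) B)
             \<le> (SUP t\<in>{num_lo Aop..num_hi Aop}. \<bar>poly_real c t - fa t\<bar>))"

lemma polyA_pbound: "\<exists>K. pbound (poly_op c Aop) K"
proof -
  let ?a = "of_real (poly_real c eta) :: complex" and ?b = "of_real (poly_real c (eta + L) - poly_real c eta) :: complex"
  have "pbound (poly_op c Aop) (max (cmod ?a) (cmod (?a + ?b)))"
    unfolding pbound_def
  proof (intro conjI ballI impI)
    fix x assume x: "x \<in> l2"
    thus "poly_op c Aop x \<in> l2" by (simp add: poly_op_A G_l2)
    assume "norm_l2 x \<le> 1"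
    have "norm_l2 (poly_op c Aop x) \<le> max (cmod ?a) (cmod (?a + ?b)) * norm_l2 x"
      unfolding poly_op_A[OF x] by (rule G_norm[OF x])
    also have "\<dots> \<le> max (cmod ?a) (cmod (?a + ?b))"
      using \<open>norm_l2 x \<le> 1\<close> norm_l2_nonneg[OF x] by (simp add: mult_left_le)
    finally show "norm_l2 (poly_op c Aop x) \<le> max (cmod ?a) (cmod (?a + ?b))" .
  qed
  thus ?thesis by blast
qed

lemma Qp_unique: assumes fc: "continuous_on {eta..eta+L} fa" and Q1: "Qp fa B1" and Q2: "Qp fa B2"
  shows "B1 = B2"
proof -
  have b1: "bounded_op B1" and b2: "bounded_op B2" using Q1 Q2 by (auto simp: Qp_def)
  have unit: "B1 y = B2 y" if y: "y \<in> l2" "norm_l2 y \<le> 1" for y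
  proof -
    have l1: "B1 y \<in> l2" "B2 y \<in> l2" using b1 b2 y by (auto simp: bounded_op_def)
    have est: "(norm_l2 (\<lambda>n. B1 y n - B2 y n))\<^sup>2 \<le> 4 * \<epsilon>\<^sup>2" if \<epsilon>: "0 < \<epsilon>" for \<epsilon>
    proof -
      obtain gp where gp: "real_polynomial_function gp" "\<And>t. t \<in> {eta..eta+L} \<Longrightarrow> \<bar>fa t - gp t\<bar> < \<epsilon>"
        using Stone_Weierstrass_real_polynomial_function[OF compact_Icc fc \<epsilon>] by blast
      obtain cs where cs: "\<And>t. poly_real cs t = gp t" using poly_fun_list[OF gp(1)] by blast
      have sup: "(SUP t\<in>{num_lo Aop..num_hi Aop}. \<bar>poly_real cs t - fa t\<bar>) \<le> \<epsilon>"
        unfolding num_range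
      proof (rule cSUP_least)
        show "{eta..eta + L} \<noteq> {}" using Lpos by simp
        fix t assume "t \<in> {eta..eta + L}"
        thus "\<bar>poly_real cs t - fa t\<bar> \<le> \<epsilon>" using gp(2)[of t] cs[of t] by simp
      qed
      obtain K0 where K0: "pbound (poly_op cs Aop) K0" using polyA_pbound by blast
      have d: "norm_l2 (op_diff (poly_op cs Aop) B y) \<le> \<epsilon>" if "Qp fa B" for B
      proof -
        have bb: "bounded_op B" using that by (simp add: Qp_def)
        obtain K where "pbound B K" using bounded_pbound[OF bb] by blast
        hence "norm_l2 (op_diff (poly_op cs Aop) B y) \<le> opnorm (op_diff (poly_op cs Aop) B)"
          using opnorm_upper[OF diff_pbound[OF K0] y] by blast
        also have "\<dots> \<le> \<epsilon>" using that sup unfolding Qp_def by (meson order.trans)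
        finally show ?thesis .
      qed
      have pl: "op_diff (poly_op cs Aop) B1 y \<in> l2" "op_diff (poly_op cs Aop) B2 y \<in> l2"
        using l1 y K0 unfolding op_diff_def pbound_def by (auto intro: l2_diff)
      have eq: "(\<lambda>n. B1 y n - B2 y n) = (\<lambda>n. op_diff (poly_op cs Aop) B2 y n - op_diff (poly_op cs Aop) B1 y n)"
        by (simp add: op_diff_def)
      have "(norm_l2 (\<lambda>n. B1 y n - B2 y n))\<^sup>2 \<le> 2 * (norm_l2 (op_diff (poly_op cs Aop) B2 y))\<^sup>2 + 2 * (norm_l2 (op_diff (poly_op cs Aop) B1 y))\<^sup>2"
        unfolding eq by (rule norm_diff_sq[OF pl(2) pl(1)])
      also have "\<dots> \<le> 2 * \<epsilon>\<^sup>2 + 2 * \<epsilon>\<^sup>2"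
        using d[OF Q1] d[OF Q2] norm_l2_nonneg[OF pl(1)] norm_l2_nonneg[OF pl(2)]
        by (intro add_mono mult_left_mono power_mono) auto
      finally show ?thesis by simp
    qed
    have dl: "(\<lambda>n. B1 y n - B2 y n) \<in> l2" by (rule l2_diff[OF l1])
    have "norm_l2 (\<lambda>n. B1 y n - B2 y n) = 0"
    proof (rule ccontr)
      assume ne: "norm_l2 (\<lambda>n. B1 y n - B2 y n) \<noteq> 0"
      let ?N = "norm_l2 (\<lambda>n. B1 y n - B2 y n)"
      have pos: "0 < ?N" using ne norm_l2_nonneg[OF dl] by simp
      have "?N\<^sup>2 \<le> 4 * (?N / 4)\<^sup>2" by (rule est) (use pos in simp)
      thus False using pos by (simp add: power2_eq_square field_simps)
    qed
    hence z: "(\<lambda>n. B1 y n - B2 y n) = (\<lambda>_. 0)" by (rule l2_zero_norm[OF dl])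
    show ?thesis
    proof (rule ext)
      fix n have "B1 y n - B2 y n = 0" using fun_cong[OF z, of n] by simp
      thus "B1 y n = B2 y n" by simp
    qed
  qed
  show ?thesis
  proof (rule ext)
    fix x show "B1 x = B2 x"
    proof (cases "x \<in> l2")
      case False thus ?thesis using Q1 Q2 by (simp add: Qp_def)
    next
      case True
      define r where "r = 1 / (norm_l2 x + 1)"
      have nx: "0 \<le> norm_l2 x" by (rule norm_l2_nonneg[OF True])
      have r: "0 < r" unfolding r_def using nx by simp
      have yl: "(\<lambda>n. complex_of_real r * x n) \<in> l2" by (rule l2_scale[OF True])
      have "norm_l2 (\<lambda>n. complex_of_real r * x n) = r * norm_l2 x"
        using norm_l2_scale[OF True] r by simp
      also have "\<dots> \<le> 1" unfolding r_def using nx by (simp add: field_simps)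
      finally have "B1 (\<lambda>n. complex_of_real r * x n) = B2 (\<lambda>n. complex_of_real r * x n)"
        using unit[OF yl] by blast
      hence "(\<lambda>n. complex_of_real r * B1 x n) = (\<lambda>n. complex_of_real r * B2 x n)"
        by (simp add: bounded_scale[OF b1 True] bounded_scale[OF b2 True])
      show ?thesis
      proof (rule ext)
        fix n have "complex_of_real r * B1 x n = complex_of_real r * B2 x n"
          using fun_cong[OF \<open>(\<lambda>n. complex_of_real r * B1 x n) = (\<lambda>n. complex_of_real r * B2 x n)\<close>, of n] by simp
        thus "B1 x n = B2 x n" using r by simp
      qed
    qed
  qed
qed

end


context twopt begin

definition Bf :: "(real \<Rightarrow> real) \<Rightarrow> op" where
  "Bf fa = (\<lambda>x. if x \<in> l2 then G (of_real (fa eta)) (of_real (fa (eta + L) - fa eta)) x else (\<lambda>_. 0))"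

lemma Qp_exists: assumes fc: "continuous_on {eta..eta+L} fa" shows "Qp fa (Bf fa)"
  unfolding Qp_def
proof (intro conjI allI impI)
  show "bounded_op (Bf fa)" unfolding Bf_def by (rule G_bounded)
  fix x assume "x \<notin> l2" thus "Bf fa x = (\<lambda>_. 0)" by (simp add: Bf_def)
next
  fix c
  define d1 where "d1 = poly_real c eta - fa eta"
  define d2 where "d2 = poly_real c (eta + L) - fa (eta + L)"
  have cont: "continuous_on {eta..eta+L} (\<lambda>t. \<bar>poly_real c t - fa t\<bar>)"
    unfolding poly_real_def by (intro continuous_intros fc)
  have bdd: "bdd_above ((\<lambda>t. \<bar>poly_real c t - fa t\<bar>) ` {eta..eta+L})"
    by (rule bounded_imp_bdd_above[OF compact_imp_bounded[OF compact_continuous_image[OF cont compact_Icc]]])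
  have m: "max \<bar>d1\<bar> \<bar>d2\<bar> \<le> (SUP t\<in>{num_lo Aop..num_hi Aop}. \<bar>poly_real c t - fa t\<bar>)"
    unfolding num_range
  proof (rule max.boundedI)
    show "\<bar>d1\<bar> \<le> (SUP t\<in>{eta..eta+L}. \<bar>poly_real c t - fa t\<bar>)"
      unfolding d1_def by (rule cSUP_upper[OF _ bdd]) (use Lpos in simp)
    show "\<bar>d2\<bar> \<le> (SUP t\<in>{eta..eta+L}. \<bar>poly_real c t - fa t\<bar>)"
      unfolding d2_def by (rule cSUP_upper[OF _ bdd]) (use Lpos in simp)
  qed
  have eq: "op_diff (poly_op c Aop) (Bf fa) x = G (of_real d1) (of_real (d2 - d1)) x" if x: "x \<in> l2" for x
    unfolding op_diff_def Bf_def poly_op_A[OF x] using x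
    by (auto intro!: ext simp: G_def d1_def d2_def algebra_simps)
  have "opnorm (op_diff (poly_op c Aop) (Bf fa)) \<le> max \<bar>d1\<bar> \<bar>d2\<bar>"
  proof (rule opnorm_le)
    fix x assume x: "x \<in> l2" "norm_l2 x \<le> 1"
    have "norm_l2 (op_diff (poly_op c Aop) (Bf fa) x) \<le> max (cmod (of_real d1)) (cmod (of_real d1 + of_real (d2 - d1))) * norm_l2 x"
      unfolding eq[OF x(1)] by (rule G_norm[OF x(1)])
    also have "\<dots> = max \<bar>d1\<bar> \<bar>d2\<bar> * norm_l2 x" by simp
    also have "\<dots> \<le> max \<bar>d1\<bar> \<bar>d2\<bar>" using x norm_l2_nonneg[OF x(1)] by (simp add: mult_left_le)
    finally show "norm_l2 (op_diff (poly_op c Aop) (Bf fa) x) \<le> max \<bar>d1\<bar> \<bar>d2\<bar>" .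
  qed
  thus "opnorm (op_diff (poly_op c Aop) (Bf fa)) \<le> (SUP t\<in>{num_lo Aop..num_hi Aop}. \<bar>poly_real c t - fa t\<bar>)"
    using m by linarith
qed

lemma op_fun_eq: assumes fc: "continuous_on {eta..eta+L} fa" shows "op_fun fa Aop = Bf fa"
proof -
  have "op_fun fa Aop = (THE B. Qp fa B)" by (simp add: op_fun_def Qp_def)
  also have "\<dots> = Bf fa"
  proof (rule the_equality)
    show "Qp fa (Bf fa)" by (rule Qp_exists[OF fc])
    fix B assume "Qp fa B" thus "B = Bf fa" using Qp_unique[OF fc _ Qp_exists[OF fc]] by blast
  qed
  finally show ?thesis .
qed

lemma op_powr_e0: "op_powr Aop a (\<lambda>m. k * e0 m) = (\<lambda>m. of_real ((eta + L) powr a) * k * e0 m)"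
proof -
  have fc: "continuous_on {eta..eta+L} (\<lambda>t. t powr a)"
    by (intro continuous_intros) (use etapos in auto)
  have kl: "(\<lambda>m. k * e0 m) \<in> l2" by (rule l2_scale[OF e0l2])
  have Pk: "P (\<lambda>m. k * e0 m) = k" using i2_scale_left[OF e0l2 e0l2, of k] e00 by simp
  show ?thesis unfolding op_powr_def op_fun_eq[OF fc] Bf_def using kl
    by (auto intro!: ext simp: G_def Pk algebra_simps)
qed

end


lemma R1:
  assumes f: "orthon f" and D: "summable (\<lambda>n. (cmod (D n))\<^sup>2)" and s: "0 < s"
    and u: "u \<in> l2" "norm_l2 u = 1"
    and T: "\<And>h. h \<in> l2 \<Longrightarrow> T h = (\<lambda>m. phi f D h * u m)"
  shows "schatten_class s T" "schatten_norm s T \<le> sqrt (\<Sum>n. (cmod (D n))\<^sup>2)" "0 \<le> schatten_norm s T"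
proof -
  let ?K = "sqrt (\<Sum>n. (cmod (D n))\<^sup>2)"
  have Tn: "norm_l2 (T h) \<le> ?K * norm_l2 h" if h: "h \<in> l2" for h
    using T[OF h] norm_l2_scale[OF u(1), of "phi f D h"] u(2) phi_summable(2)[OF f D h] by simp
  have bT: "bounded_op T" unfolding bounded_op_def
  proof (intro conjI ballI allI exI)
    fix x assume x: "x \<in> l2"
    show "T x \<in> l2" using T[OF x] l2_scale[OF u(1)] by simp
    show "norm_l2 (T x) \<le> ?K * norm_l2 x" by (rule Tn[OF x])
  next
    fix x y a b assume x: "x \<in> l2" and y: "y \<in> l2"
    show "T (\<lambda>n. a * x n + b * y n) = (\<lambda>n. a * T x n + b * T y n)"
      using T[OF l2_lin[OF x y]] T[OF x] T[OF y] phi_lin[OF f D x y] by (simp add: algebra_simps)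
  qed
  note r = rank1_schatten[OF s u(1) bT T]
  show "schatten_class s T" by (rule r(1))
  show "0 \<le> schatten_norm s T" using r(2,3) by simp
  have "opnorm T \<le> ?K"
  proof (rule opnorm_le)
    fix x assume x: "x \<in> l2" "norm_l2 x \<le> 1"
    have "0 \<le> ?K" using suminf_nonneg[OF D] by simp
    thus "norm_l2 (T x) \<le> ?K" using Tn[OF x(1)] x(2) by (meson mult_left_le order.trans)
  qed
  thus "schatten_norm s T \<le> ?K" using r(2) by simp
qed

lemma phi_single: "phi f (\<lambda>k. if k = n then d else 0) h = d * inner_l2 h (f n)"
proof -
  have "phi f (\<lambda>k. if k = n then d else 0) h = (\<Sum>k\<in>{n}. (if k = n then d else 0) * inner_l2 h (f k))"
    unfolding phi_def by (rule suminf_finite) auto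
  thus ?thesis by simp
qed

lemma main_gen:
  fixes s C L M a :: real and e f :: "nat \<Rightarrow> vec" and X :: op and c :: "nat \<Rightarrow> real"
  assumes s: "1 \<le> s" and e: "orthonormal_basis e" and f: "orthonormal_basis f" and X: "bounded_op X"
    and c0: "\<And>n. 0 \<le> c n" and cC: "\<And>n. c n \<le> C" and Lp: "0 < L" and a: "a \<le> 0"
    and M: "L powr a * C \<le> M"
  shows "\<exists>S. schatten_sums s
              (\<lambda>n. (\<lambda>h m. complex_of_real (c n) * inner_l2 (X (f 0)) (e n) * tensor (f n) (e 0) h m)) S \<and>
            (\<forall>\<eta>>0. schatten_class s
                        (\<lambda>h. op_powr (\<lambda>x m. complex_of_real \<eta> * x m
                                  + complex_of_real L * tensor (e 0) (e 0) x m) a (S h)) \<and>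
                     schatten_norm s
                        (\<lambda>h. op_powr (\<lambda>x m. complex_of_real \<eta> * x m
                                  + complex_of_real L * tensor (e 0) (e 0) x m) a (S h))
                      \<le> M * norm_l2 (X (f 0))) \<and>
            schatten_norm s S \<le> C * norm_l2 (X (f 0))"
proof -
  have sp: "0 < s" using s by simp
  have eo: "orthon e" and fo: "orthon f" using e f by (auto simp: onb_orthonormal)
  have el2: "\<And>n. e n \<in> l2" and eo': "\<And>m n. inner_l2 (e m) (e n) = (if m = n then 1 else 0)"
    using eo by (auto simp: orthon_def)
  have fl2: "\<And>n. f n \<in> l2" using fo by (auto simp: orthon_def)
  have n0: "norm_l2 (e 0) = 1"
    using norm_sq_inner[OF el2[of 0]] eo'[of 0 0] norm_l2_nonneg[OF el2[of 0]] by (simp add: power2_eq_1_iff)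
  define v where "v = X (f 0)"
  have vl2: "v \<in> l2" using X fl2 unfolding v_def bounded_op_def by blast
  define x where "x n = inner_l2 v (e n)" for n
  define D where "D n = complex_of_real (c n) * x n" for n
  have C0: "0 \<le> C" using c0[of 0] cC[of 0] by linarith
  note bx = bessel[OF eo vl2, folded x_def]
  have Dpt: "(cmod (D n))\<^sup>2 \<le> C\<^sup>2 * (cmod (x n))\<^sup>2" for n
    unfolding D_def using c0[of n] cC[of n]
    by (simp add: norm_mult power_mult_distrib mult_right_mono power_mono)
  have Ds: "summable (\<lambda>n. (cmod (D n))\<^sup>2)"
    by (rule summable_comparison_test[where g="\<lambda>n. C\<^sup>2 * (cmod (x n))\<^sup>2"])
       (use Dpt bx(1) in \<open>auto intro: summable_mult\<close>)
  have DK: "sqrt (\<Sum>n. (cmod (D n))\<^sup>2) \<le> C * norm_l2 v"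
  proof -
    have "(\<Sum>n. (cmod (D n))\<^sup>2) \<le> (\<Sum>n. C\<^sup>2 * (cmod (x n))\<^sup>2)"
      by (rule suminf_le[OF Dpt Ds]) (rule summable_mult[OF bx(1)])
    also have "\<dots> = C\<^sup>2 * (\<Sum>n. (cmod (x n))\<^sup>2)" by (rule suminf_mult[OF bx(1)])
    also have "\<dots> \<le> C\<^sup>2 * (norm_l2 v)\<^sup>2" by (rule mult_left_mono[OF bx(2)]) simp
    also have "\<dots> = (C * norm_l2 v)\<^sup>2" by (simp add: power_mult_distrib)
    finally show ?thesis using C0 norm_l2_nonneg[OF vl2] by (simp add: real_sqrt_le_iff real_le_lsqrt)
  qed
  define S where "S = (\<lambda>h m. phi f D h * e 0 m)"
  note R1' = R1[OF fo _ sp el2[of 0] n0]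
  have Sc: "schatten_class s S" and Sn: "schatten_norm s S \<le> C * norm_l2 v"
    using R1'[OF Ds, of S] DK by (auto simp: S_def)
  define A where "A = (\<lambda>n. (\<lambda>h m. complex_of_real (c n) * inner_l2 (X (f 0)) (e n) * tensor (f n) (e 0) h m))"
  have A_eq: "A n h = (\<lambda>m. phi f (\<lambda>k. if k = n then D n else 0) h * e 0 m)" for n h
    unfolding A_def phi_single by (auto simp: tensor_def D_def x_def v_def)
  have Ac: "schatten_class s (A n)" for n
  proof (rule R1'(1))
    show "summable (\<lambda>k. (cmod (if k = n then D n else 0))\<^sup>2)"
      by (rule summable_finite[of "{n}"]) auto
  qed (simp add: A_eq)
  define DN where "DN N k = (if k < N then 0 else D k)" for N k
  have DNs: "summable (\<lambda>k. (cmod (DN N k))\<^sup>2)" for N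
    by (rule summable_comparison_test[OF _ Ds]) (auto simp: DN_def)
  have DNsum: "(\<Sum>k. (cmod (DN N k))\<^sup>2) = (\<Sum>k. (cmod (D k))\<^sup>2) - (\<Sum>k<N. (cmod (D k))\<^sup>2)" for N
  proof -
    have fin: "(\<Sum>k. if k < N then (cmod (D k))\<^sup>2 else 0) = (\<Sum>k<N. (cmod (D k))\<^sup>2)"
      by (subst suminf_finite[of "{..<N}"]) auto
    have "(\<lambda>k. (cmod (DN N k))\<^sup>2) = (\<lambda>k. (cmod (D k))\<^sup>2 - (if k < N then (cmod (D k))\<^sup>2 else 0))"
      by (auto simp: DN_def)
    hence "(\<Sum>k. (cmod (DN N k))\<^sup>2) = (\<Sum>k. (cmod (D k))\<^sup>2) - (\<Sum>k. if k < N then (cmod (D k))\<^sup>2 else 0)"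
      using suminf_diff[OF Ds summable_finite[of "{..<N}" "\<lambda>k. if k < N then (cmod (D k))\<^sup>2 else 0"]] by simp
    thus ?thesis using fin by simp
  qed
  have diff_eq: "op_diff S (\<lambda>h n. \<Sum>i<N. A i h n) h = (\<lambda>m. phi f (DN N) h * e 0 m)" if h: "h \<in> l2" for N h
  proof -
    have sm: "summable (\<lambda>k. D k * inner_l2 h (f k))" by (rule phi_summable(1)[OF fo Ds h])
    have fin: "(\<Sum>k. if k < N then D k * inner_l2 h (f k) else 0) = (\<Sum>k<N. D k * inner_l2 h (f k))"
      by (subst suminf_finite[of "{..<N}"]) auto
    have "(\<lambda>k. DN N k * inner_l2 h (f k)) = (\<lambda>k. D k * inner_l2 h (f k) - (if k < N then D k * inner_l2 h (f k) else 0))"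
      by (auto simp: DN_def)
    hence pd: "phi f (DN N) h = phi f D h - (\<Sum>k<N. D k * inner_l2 h (f k))"
      unfolding phi_def using suminf_diff[OF sm summable_finite[of "{..<N}" "\<lambda>k. if k < N then D k * inner_l2 h (f k) else 0"]] fin
      by simp
    have sA: "(\<Sum>i<N. A i h m) = (\<Sum>k<N. D k * inner_l2 h (f k)) * e 0 m" for m
      unfolding A_eq phi_single by (simp add: sum_distrib_right)
    show ?thesis
    proof (rule ext)
      fix m show "op_diff S (\<lambda>h n. \<Sum>i<N. A i h n) h m = phi f (DN N) h * e 0 m"
        unfolding op_diff_def S_def sA pd by (simp add: left_diff_distrib)
    qed
  qed
  have tail: "(\<lambda>N. schatten_norm s (op_diff S (\<lambda>h n. \<Sum>i<N. A i h n))) \<longlonglongrightarrow> 0"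
  proof (rule tendsto_sandwich[where f="\<lambda>_. 0" and h="\<lambda>N. sqrt (\<Sum>k. (cmod (DN N k))\<^sup>2)"])
    show "\<forall>\<^sub>F N in sequentially. 0 \<le> schatten_norm s (op_diff S (\<lambda>h n. \<Sum>i<N. A i h n))"
      using R1'(3)[OF DNs diff_eq] by simp
    show "\<forall>\<^sub>F N in sequentially. schatten_norm s (op_diff S (\<lambda>h n. \<Sum>i<N. A i h n)) \<le> sqrt (\<Sum>k. (cmod (DN N k))\<^sup>2)"
      using R1'(2)[OF DNs diff_eq] by simp
    show "(\<lambda>_. 0) \<longlonglongrightarrow> (0::real)" by simp
    have "(\<lambda>N. (\<Sum>k. (cmod (D k))\<^sup>2) - (\<Sum>k<N. (cmod (D k))\<^sup>2)) \<longlonglongrightarrow> (\<Sum>k. (cmod (D k))\<^sup>2) - (\<Sum>k. (cmod (D k))\<^sup>2)"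
      by (intro tendsto_diff tendsto_const summable_LIMSEQ[OF Ds])
    hence "(\<lambda>N. \<Sum>k. (cmod (DN N k))\<^sup>2) \<longlonglongrightarrow> 0" unfolding DNsum by simp
    thus "(\<lambda>N. sqrt (\<Sum>k. (cmod (DN N k))\<^sup>2)) \<longlonglongrightarrow> 0" using tendsto_real_sqrt by fastforce
  qed
  have SS: "schatten_sums s A S" unfolding schatten_sums_def using Sc Ac tail by blast
  have eta_part: "schatten_class s (\<lambda>h. op_powr (\<lambda>x m. complex_of_real \<eta> * x m
                                  + complex_of_real L * tensor (e 0) (e 0) x m) a (S h)) \<and>
                  schatten_norm s (\<lambda>h. op_powr (\<lambda>x m. complex_of_real \<eta> * x m
                                  + complex_of_real L * tensor (e 0) (e 0) x m) a (S h))
                      \<le> M * norm_l2 v" if \<eta>: "0 < \<eta>" for \<eta>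
  proof -
    interpret tp: twopt "e 0" "e 1" \<eta> L
      by unfold_locales (use el2 eo' \<eta> Lp in auto)
    define \<kappa> where "\<kappa> = (\<eta> + L) powr a"
    have k0: "0 \<le> \<kappa>" by (simp add: \<kappa>_def)
    have kL: "\<kappa> \<le> L powr a" unfolding \<kappa>_def by (rule powr_mono2'[OF a Lp]) (use \<eta> in simp)
    define D' where "D' n = complex_of_real \<kappa> * D n" for n
    have D's: "summable (\<lambda>n. (cmod (D' n))\<^sup>2)"
      unfolding D'_def using summable_mult[OF Ds, of "\<kappa>\<^sup>2"] k0 by (simp add: norm_mult power_mult_distrib)
    have phiD': "phi f D' h = complex_of_real \<kappa> * phi f D h" if "h \<in> l2" for h
      unfolding phi_def D'_def using suminf_mult[OF phi_summable(1)[OF fo Ds that], of "complex_of_real \<kappa>"]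
      by (simp add: mult.assoc)
    have Teq: "(\<lambda>h. op_powr (\<lambda>x m. complex_of_real \<eta> * x m + complex_of_real L * tensor (e 0) (e 0) x m) a (S h)) h
       = (\<lambda>m. phi f D' h * e 0 m)" if "h \<in> l2" for h
    proof -
      have "op_powr tp.Aop a (\<lambda>m. phi f D h * e 0 m) = (\<lambda>m. complex_of_real \<kappa> * phi f D h * e 0 m)"
        unfolding \<kappa>_def by (rule tp.op_powr_e0)
      thus ?thesis unfolding tp.Aop_def S_def using phiD'[OF that] by simp
    qed
    have D'K: "sqrt (\<Sum>n. (cmod (D' n))\<^sup>2) = \<kappa> * sqrt (\<Sum>n. (cmod (D n))\<^sup>2)"
    proof -
      have "(\<Sum>n. (cmod (D' n))\<^sup>2) = \<kappa>\<^sup>2 * (\<Sum>n. (cmod (D n))\<^sup>2)"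
        unfolding D'_def using suminf_mult[OF Ds, of "\<kappa>\<^sup>2"] k0 by (simp add: norm_mult power_mult_distrib)
      thus ?thesis using k0 by (simp add: real_sqrt_mult)
    qed
    have "\<kappa> * sqrt (\<Sum>n. (cmod (D n))\<^sup>2) \<le> L powr a * (C * norm_l2 v)"
      by (rule mult_mono[OF kL DK]) (use suminf_nonneg[OF Ds] in auto)
    also have "\<dots> \<le> M * norm_l2 v" using M norm_l2_nonneg[OF vl2]
      by (metis mult.assoc mult_right_mono)
    finally have bnd: "sqrt (\<Sum>n. (cmod (D' n))\<^sup>2) \<le> M * norm_l2 v" unfolding D'K .
    show ?thesis using R1'(1,2)[OF D's Teq] bnd by auto
  qed
  show ?thesis
    by (rule exI[of _ S]) (use SS eta_part Sn in \<open>simp add: A_def v_def\<close>)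
qed

lemma term_le_suminf: fixes g :: "nat \<Rightarrow> real"
  assumes "summable g" "\<And>n. 0 \<le> g n" shows "g n \<le> suminf g"
  using sum_le_suminf[OF assms(1), of "{n}"] assms(2) by simp

lemma part1:
  fixes q r s :: real and e f :: "nat \<Rightarrow> vec" and X :: op and lam rho :: "nat \<Rightarrow> real"
  assumes q: "q \<ge> 1" and r: "r \<ge> 1" and s: "s \<ge> 1"
    and e: "orthonormal_basis e" and f: "orthonormal_basis f" and X: "bounded_op X"
    and lp: "\<forall>n. lam n > 0" and rp: "\<forall>n. rho n > 0" and ls: "summable lam" and rs: "summable rho"
  shows "\<exists>S. schatten_sums s
              (\<lambda>n. (\<lambda>h m. complex_of_real (lam n powr (1/2 - 1/(2*q)) * rho n powr (1/(2*r)))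
                     * inner_l2 (X (f 0)) (e n) * tensor (f n) (e 0) h m)) S \<and>
            (\<forall>\<eta>>0. schatten_class s
                        (\<lambda>h. op_powr (\<lambda>x m. complex_of_real \<eta> * x m
                                  + complex_of_real (\<Sum>n. lam n) * tensor (e 0) (e 0) x m)
                                 (1/(2*q) - 1/2) (S h)) \<and>
                     schatten_norm s
                        (\<lambda>h. op_powr (\<lambda>x m. complex_of_real \<eta> * x m
                                  + complex_of_real (\<Sum>n. lam n) * tensor (e 0) (e 0) x m)
                                 (1/(2*q) - 1/2) (S h))
                      \<le> (\<Sum>n. rho n) powr (1/(2*r)) * norm_l2 (X (f 0))) \<and>
            schatten_norm s S
              \<le> (\<Sum>n. lam n) powr (1/2 - 1/(2*q)) * (\<Sum>n. rho n) powr (1/(2*r))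
                 * norm_l2 (X (f 0))"
proof -
  let ?\<Lambda> = "\<Sum>n. lam n" and ?P = "\<Sum>n. rho n"
  have al: "0 \<le> 1/2 - 1/(2*q)" using q by (simp add: field_simps)
  have Lp: "0 < ?\<Lambda>" by (rule suminf_pos[OF ls]) (use lp in auto)
  have lle: "lam n \<le> ?\<Lambda>" for n by (rule term_le_suminf[OF ls]) (use lp in \<open>auto intro: less_imp_le\<close>)
  have rle: "rho n \<le> ?P" for n by (rule term_le_suminf[OF rs]) (use rp in \<open>auto intro: less_imp_le\<close>)
  have cle: "lam n powr (1/2 - 1/(2*q)) * rho n powr (1/(2*r)) \<le> ?\<Lambda> powr (1/2 - 1/(2*q)) * ?P powr (1/(2*r))" for n
    by (intro mult_mono powr_mono2) (use al lle rle lp rp r in \<open>auto intro: less_imp_le\<close>)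
  have M: "?\<Lambda> powr (1/(2*q) - 1/2) * (?\<Lambda> powr (1/2 - 1/(2*q)) * ?P powr (1/(2*r))) \<le> ?P powr (1/(2*r))"
  proof -
    have "?\<Lambda> powr (1/(2*q) - 1/2) * ?\<Lambda> powr (1/2 - 1/(2*q)) = ?\<Lambda> powr ((1/(2*q) - 1/2) + (1/2 - 1/(2*q)))"
      by (rule powr_add[symmetric])
    also have "\<dots> = 1" using Lp by simp
    finally show ?thesis by (simp add: mult.assoc[symmetric])
  qed
  show ?thesis
    using main_gen[OF s e f X _ cle Lp _ M] al by simp
qed

lemma part2:
  fixes q r s :: real and e f :: "nat \<Rightarrow> vec" and X :: op and gam w :: "nat \<Rightarrow> real"
  assumes q: "q > 1" and r: "r \<ge> 1" and s: "s \<ge> 1"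
    and e: "orthonormal_basis e" and f: "orthonormal_basis f" and X: "bounded_op X"
    and gp: "\<forall>n. gam n > 0" and wp: "\<forall>n. w n > 0"
    and gs: "summable (\<lambda>n. gam n powr (2*q/(q-1)))" and ws: "summable (\<lambda>n. w n powr (2*r))"
  shows "\<exists>S. schatten_sums s
              (\<lambda>n. (\<lambda>h m. complex_of_real (gam n * w n)
                     * inner_l2 (X (f 0)) (e n) * tensor (f n) (e 0) h m)) S \<and>
            (\<forall>\<eta>>0. schatten_class s
                        (\<lambda>h. op_powr (\<lambda>x m. complex_of_real \<eta> * x m
                                  + complex_of_real (\<Sum>n. gam n powr (2*q/(q-1))) * tensor (e 0) (e 0) x m)
                                 (1/(2*q) - 1/2) (S h)) \<and>
                     schatten_norm s
                        (\<lambda>h. op_powr (\<lambda>x m. complex_of_real \<eta> * x m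
                                  + complex_of_real (\<Sum>n. gam n powr (2*q/(q-1))) * tensor (e 0) (e 0) x m)
                                 (1/(2*q) - 1/2) (S h))
                      \<le> (\<Sum>n. w n powr (2*r)) powr (1/(2*r)) * norm_l2 (X (f 0))) \<and>
            schatten_norm s S
              \<le> (\<Sum>n. gam n powr (2*q/(q-1))) powr ((q-1)/(2*q)) * (\<Sum>n. w n powr (2*r)) powr (1/(2*r))
                 * norm_l2 (X (f 0))"
proof -
  let ?G = "\<Sum>n. gam n powr (2*q/(q-1))" and ?W = "\<Sum>n. w n powr (2*r)"
  have gpp: "0 < gam n powr (2*q/(q-1))" for n using gp[rule_format, of n] by simp
  have Gp: "0 < ?G" by (rule suminf_pos[OF gs gpp])
  have gle: "gam n \<le> ?G powr ((q-1)/(2*q))" for n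
  proof -
    have "gam n powr (2*q/(q-1)) \<le> ?G" by (rule term_le_suminf[OF gs]) simp
    hence "(gam n powr (2*q/(q-1))) powr ((q-1)/(2*q)) \<le> ?G powr ((q-1)/(2*q))"
      by (rule powr_mono2[rotated 2]) (use q in auto)
    moreover have "(gam n powr (2*q/(q-1))) powr ((q-1)/(2*q)) = gam n"
      using q gp[rule_format, of n] by (simp add: powr_powr)
    ultimately show ?thesis by simp
  qed
  have wle: "w n \<le> ?W powr (1/(2*r))" for n
  proof -
    have "w n powr (2*r) \<le> ?W" by (rule term_le_suminf[OF ws]) simp
    hence "(w n powr (2*r)) powr (1/(2*r)) \<le> ?W powr (1/(2*r))"
      by (rule powr_mono2[rotated 2]) (use r in auto)
    moreover have "(w n powr (2*r)) powr (1/(2*r)) = w n"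
      using r wp[rule_format, of n] by (simp add: powr_powr)
    ultimately show ?thesis by simp
  qed
  have cle: "gam n * w n \<le> ?G powr ((q-1)/(2*q)) * ?W powr (1/(2*r))" for n
    by (intro mult_mono gle wle) (use gp wp in \<open>auto intro: less_imp_le\<close>)
  have a: "1/(2*q) - 1/2 \<le> 0" using q by (simp add: field_simps)
  have M: "?G powr (1/(2*q) - 1/2) * (?G powr ((q-1)/(2*q)) * ?W powr (1/(2*r))) \<le> ?W powr (1/(2*r))"
  proof -
    have "?G powr (1/(2*q) - 1/2) * ?G powr ((q-1)/(2*q)) = ?G powr ((1/(2*q) - 1/2) + (q-1)/(2*q))"
      by (rule powr_add[symmetric])
    also have "(1/(2*q) - 1/2) + (q-1)/(2*q) = 0" using q by (simp add: field_simps)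
    finally show ?thesis using Gp by (simp add: mult.assoc[symmetric])
  qed
  show ?thesis
    using main_gen[OF s e f X _ cle Gp a M] gp wp by (simp add: less_imp_le)
qed

theorem theorem4p1:
  fixes q r s :: real and e f :: "nat \<Rightarrow> vec" and X :: op
  assumes "q \<ge> 1" and "r \<ge> 1" and "s \<ge> 1"
    and "1 / (2 * q) + 1 / (2 * r) = 1 / s"
    and "orthonormal_basis e" and "orthonormal_basis f"
    and "schatten_class s X"
  shows
   "(\<forall>lam rho :: nat \<Rightarrow> real.
       (\<forall>n. lam n > 0) \<and> (\<forall>n. rho n > 0) \<and> summable lam \<and> summable rho \<longrightarrow>
       (\<exists>S. schatten_sums s
              (\<lambda>n. (\<lambda>h m. complex_of_real (lam n powr (1/2 - 1/(2*q)) * rho n powr (1/(2*r)))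
                     * inner_l2 (X (f 0)) (e n) * tensor (f n) (e 0) h m)) S \<and>
            (\<forall>\<eta>>0. schatten_class s
                        (\<lambda>h. op_powr (\<lambda>x m. complex_of_real \<eta> * x m
                                  + complex_of_real (\<Sum>n. lam n) * tensor (e 0) (e 0) x m)
                                 (1/(2*q) - 1/2) (S h)) \<and>
                     schatten_norm s
                        (\<lambda>h. op_powr (\<lambda>x m. complex_of_real \<eta> * x m
                                  + complex_of_real (\<Sum>n. lam n) * tensor (e 0) (e 0) x m)
                                 (1/(2*q) - 1/2) (S h))
                      \<le> (\<Sum>n. rho n) powr (1/(2*r)) * norm_l2 (X (f 0))) \<and>
            schatten_norm s S
              \<le> (\<Sum>n. lam n) powr (1/2 - 1/(2*q)) * (\<Sum>n. rho n) powr (1/(2*r))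
                 * norm_l2 (X (f 0))))
    \<and>
    (q > 1 \<longrightarrow>
     (\<forall>gam w :: nat \<Rightarrow> real.
       (\<forall>n. gam n > 0) \<and> (\<forall>n. w n > 0) \<and>
       summable (\<lambda>n. gam n powr (2*q/(q-1))) \<and> summable (\<lambda>n. w n powr (2*r)) \<longrightarrow>
       (\<exists>S. schatten_sums s
              (\<lambda>n. (\<lambda>h m. complex_of_real (gam n * w n)
                     * inner_l2 (X (f 0)) (e n) * tensor (f n) (e 0) h m)) S \<and>
            (\<forall>\<eta>>0. schatten_class s
                        (\<lambda>h. op_powr (\<lambda>x m. complex_of_real \<eta> * x m
                                  + complex_of_real (\<Sum>n. gam n powr (2*q/(q-1))) * tensor (e 0) (e 0) x m)
                                 (1/(2*q) - 1/2) (S h)) \<and>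
                     schatten_norm s
                        (\<lambda>h. op_powr (\<lambda>x m. complex_of_real \<eta> * x m
                                  + complex_of_real (\<Sum>n. gam n powr (2*q/(q-1))) * tensor (e 0) (e 0) x m)
                                 (1/(2*q) - 1/2) (S h))
                      \<le> (\<Sum>n. w n powr (2*r)) powr (1/(2*r)) * norm_l2 (X (f 0))) \<and>
            schatten_norm s S
              \<le> (\<Sum>n. gam n powr (2*q/(q-1))) powr ((q-1)/(2*q)) * (\<Sum>n. w n powr (2*r)) powr (1/(2*r))
                 * norm_l2 (X (f 0)))))"
  proof -
  have X: "bounded_op X" using assms(7) by (simp add: schatten_class_def)
  show ?thesis
    apply (intro conjI allI impI)
    subgoal for lam rho using part1[OF assms(1,2,3,5,6) X, of lam rho] by blast
    subgoal for gam w using part2[OF _ assms(2,3,5,6) X, where gam=gam and w=w] by blast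
    done
qed

end
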